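(* Let $n\ge 1$ and $\mathbf{x}\in\{0,1\}^n$. Let $\omega=\omega(\mathbf{x}')$ be the Hamming weight of the derivative sequence $\mathbf{x}'$, let $m$ be the number of 1-runs in $\mathbf{x}'$, and let $m_1$ be the number of 1-runs of length $1$ in $\mathbf{x}'$. Then (a) $|\Phi_1(\mathbf{x})| = 1+\omega = r(\mathbf{x})$; (b) $|\Phi_2(\mathbf{x})| = 1+m+\binom{\omega}{2}$; (c) $|\Phi_3(\mathbf{x})| = 1+m_1+m(\omega-3)+\binom{\omega}{3}-\binom{\omega}{2}+2\omega$.
   Context: A grain pattern of length $n$ is a subset $E\subseteq\{2,\dots,n\}$ containing no two consecutive integers. For such $E$, the map $\phi_E:\{0,1\}^n\to\{0,1\}^n$ sends $\mathbf{x}=(x_1,\dots,x_n)$ to $\mathbf{y}=(y_1,\dots,y_n)$ with $y_j=x_{j-1}$ if $j\in E$ and $y_j=x_j$ otherwise. For $t\ge0$, $\mathcal{E}_{n,t}$ is the set of grain patterns $E$ of length $n$ with $|E|\le t$, and $\Phi_t(\mathbf{x})=\{\phi_E(\mathbf{x}):E\in\mathcal{E}_{n,t}\}$ (a set, so distinct patterns giving the same sequence are counted once). A run of $\mathbf{x}$ is a maximal block of consecutive identical symbols; $r(\mathbf{x})$ is the number of runs of $\mathbf{x}$. The derivative sequence of $\mathbf{x}$ is $\mathbf{x}'=(x'_2,\dots,x'_n)$ with $x'_j=x_{j-1}\oplus x_j$ (addition mod 2); a 1-run of $\mathbf{x}'$ is a maximal block of consecutive 1s in $\mathbf{x}'$.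 Binomial coefficients $\binom{a}{b}$ are $0$ when $b>a\ge 0$. *)

theory Defs
  imports Main
begin

text \<open>Binary sequences of length n are lists of booleans of length n (True = 1).
  The paper's 1-based index j corresponds to list position j - 1.\<close>

definition grain_pattern :: "nat \<Rightarrow> nat set \<Rightarrow> bool" where
  "grain_pattern n E \<longleftrightarrow> E \<subseteq> {2..n} \<and> (\<forall>j\<in>E. Suc j \<notin> E)"

definition phi :: "nat set \<Rightarrow> bool list \<Rightarrow> bool list" where
  "phi E x = map (\<lambda>j. if j \<in> E then x ! (j - 2) else x ! (j - 1)) [1..<Suc (length x)]"

definition Phi :: "nat \<Rightarrow> bool list \<Rightarrow> bool list set" where
  "Phi t x = {phi E x | E. grain_pattern (length x) E \<and> card E \<le> t}"

definition runs :: "bool list \<Rightarrow> (nat \<times> nat) set" where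
  "runs xs = {(i, j). i \<le> j \<and> j < length xs \<and> (\<forall>k\<in>{i..j}. xs ! k = xs ! i)
     \<and> (i = 0 \<or> xs ! (i - 1) \<noteq> xs ! i) \<and> (Suc j = length xs \<or> xs ! Suc j \<noteq> xs ! i)}"

definition num_runs :: "bool list \<Rightarrow> nat" where
  "num_runs xs = card (runs xs)"

definition one_runs :: "bool list \<Rightarrow> (nat \<times> nat) set" where
  "one_runs xs = {(i, j) \<in> runs xs. xs ! i}"

definition deriv_seq :: "bool list \<Rightarrow> bool list" where
  "deriv_seq x = map (\<lambda>(a, b). a \<noteq> b) (zip x (tl x))"

definition hamming_weight :: "bool list \<Rightarrow> nat" where
  "hamming_weight xs = length (filter id xs)"

end

theory Submission
  imports Defs
begin


definition nc :: "nat set \<Rightarrow> bool" where "nc E \<longleftrightarrow> (\<forall>j\<in>E. Suc j \<notin> E)"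
definition ak :: "nat \<Rightarrow> nat set \<Rightarrow> nat" where
  "ak k A = card {E. E \<subseteq> A \<and> nc E \<and> card E = k}"
definition pp :: "nat set \<Rightarrow> nat set" where "pp A = {j\<in>A. Suc j \<in> A}"
definition qq :: "nat set \<Rightarrow> nat set" where "qq A = {j\<in>A. Suc j \<in> A \<and> Suc (Suc j) \<in> A}"

lemma ak_0: "finite A \<Longrightarrow> ak 0 A = 1"
proof -
  assume f: "finite A"
  have "{E. E \<subseteq> A \<and> nc E \<and> card E = 0} = {{}}"
    using f by (auto simp: nc_def dest: finite_subset)
  thus ?thesis by (simp add: ak_def)
qed

lemma ak_empty: "ak (Suc k) {} = 0"
  by (simp add: ak_def)

lemma ak_insert:
  assumes fB: "finite B" and lt: "\<forall>b\<in>B. b < N"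
  shows "ak (Suc k) (insert N B) = ak (Suc k) B + ak k (B - {N - 1})"
proof -
  define S1 where "S1 = {E. E \<subseteq> B \<and> nc E \<and> card E = Suc k}"
  define S2 where "S2 = {F. F \<subseteq> B - {N - 1} \<and> nc F \<and> card F = k}"
  have NB: "N \<notin> B" using lt by auto
  have eq: "{E. E \<subseteq> insert N B \<and> nc E \<and> card E = Suc k} = S1 \<union> insert N ` S2"
  proof (intro equalityI subsetI)
    fix E assume "E \<in> {E. E \<subseteq> insert N B \<and> nc E \<and> card E = Suc k}"
    hence E: "E \<subseteq> insert N B" "nc E" "card E = Suc k" by auto
    have fE: "finite E" using E(1) fB finite_subset by blast
    show "E \<in> S1 \<union> insert N ` S2"
    proof (cases "N \<in> E")
      case False
      thus ?thesis using E by (auto simp: S1_def)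
    next
      case True
      define F where "F = E - {N}"
      have "F \<subseteq> B" using E(1) by (auto simp: F_def)
      moreover have "N - 1 \<notin> F"
      proof
        assume a: "N - 1 \<in> F"
        hence "N - 1 < N" using \<open>F \<subseteq> B\<close> lt by auto
        hence "Suc (N - 1) = N" by simp
        thus False using a E(2) True by (auto simp: nc_def F_def)
      qed
      moreover have "nc F" using E(2) by (auto simp: nc_def F_def)
      moreover have "card F = k" using E(3) True fE by (simp add: F_def)
      moreover have "E = insert N F" using True by (auto simp: F_def)
      ultimately show ?thesis by (auto simp: S2_def)
    qed
  next
    fix E assume "E \<in> S1 \<union> insert N ` S2"
    thus "E \<in> {E. E \<subseteq> insert N B \<and> nc E \<and> card E = Suc k}"
    proof
      assume "E \<in> S1" thus ?thesis by (auto simp: S1_def)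
    next
      assume "E \<in> insert N ` S2"
      then obtain F where F: "F \<subseteq> B - {N - 1}" "nc F" "card F = k" and EF: "E = insert N F"
        by (auto simp: S2_def)
      have fF: "finite F" using F(1) fB finite_subset by blast
      have NF: "N \<notin> F" using F(1) NB by auto
      have "nc E"
        unfolding nc_def EF
      proof
        fix j assume j: "j \<in> insert N F"
        show "Suc j \<notin> insert N F"
        proof (cases "j = N")
          case True thus ?thesis using F(1) lt by fastforce
        next
          case False
          hence "j \<in> F" using j by auto
          hence "Suc j \<noteq> N" using F(1) by auto
          thus ?thesis using F(2) \<open>j \<in> F\<close> by (auto simp: nc_def)
        qed
      qed
      thus ?thesis using F fF NF EF by auto
    qed
  qed
  have fin1: "finite S1" using fB unfolding S1_def by (auto intro: finite_subset[of _ "Pow B"])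
  have fin2: "finite S2" using fB unfolding S2_def by (auto intro: finite_subset[of _ "Pow B"])
  have disj: "S1 \<inter> insert N ` S2 = {}" using NB by (auto simp: S1_def)
  have inj: "inj_on (insert N) S2"
  proof (rule inj_onI)
    fix F G assume "F \<in> S2" "G \<in> S2" "insert N F = insert N G"
    moreover have "N \<notin> F" "N \<notin> G" using \<open>F \<in> S2\<close> \<open>G \<in> S2\<close> NB by (auto simp: S2_def)
    ultimately show "F = G" by (metis insert_ident)
  qed
  have "ak (Suc k) (insert N B) = card (S1 \<union> insert N ` S2)" by (simp add: ak_def eq)
  also have "\<dots> = card S1 + card (insert N ` S2)" using fin1 fin2 disj by (simp add: card_Un_disjoint)
  also have "\<dots> = card S1 + card S2" using inj by (simp add: card_image)
  finally show ?thesis by (simp add: ak_def S1_def S2_def)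
qed


lemma aux_sub: "Suc x = N - Suc 0 \<Longrightarrow> x = N - Suc (Suc 0)" by arith

lemma pp_insert:
  assumes fB: "finite B" and lt: "\<forall>b\<in>B. b < N"
  shows "card (pp (insert N B)) = card (pp B) + (if N - 1 \<in> B then 1 else 0)"
proof -
  have fp: "finite (pp B)" using fB by (simp add: pp_def)
  have "pp (insert N B) = (if N - 1 \<in> B then insert (N - 1) (pp B) else pp B)"
    using lt by (auto simp: pp_def)
  moreover have "N - 1 \<notin> pp B" using lt by (auto simp: pp_def)
  ultimately show ?thesis using fp by simp
qed

lemma qq_insert:
  assumes fB: "finite B" and lt: "\<forall>b\<in>B. b < N"
  shows "card (qq (insert N B)) = card (qq B) + (if 2 \<le> N \<and> N - 1 \<in> B \<and> N - 2 \<in> B then 1 else 0)"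
proof -
  have fp: "finite (qq B)" using fB by (simp add: qq_def)
  have "qq (insert N B) = (if 2 \<le> N \<and> N - 1 \<in> B \<and> N - 2 \<in> B then insert (N - 2) (qq B) else qq B)"
    using lt by (auto simp: qq_def Suc_diff_Suc numeral_2_eq_2)
  moreover have "N - 2 \<notin> qq B" using lt by (auto simp: qq_def)
  ultimately show ?thesis using fp by simp
qed

lemma pp_remove:
  assumes fB: "finite B" and lt: "\<forall>b\<in>B. b < N"
  shows "card (pp (B - {N - 1})) = card (pp B) - (if 2 \<le> N \<and> N - 1 \<in> B \<and> N - 2 \<in> B then 1 else 0)"
proof -
  have fp: "finite (pp B)" using fB by (simp add: pp_def)
  have "pp (B - {N - 1}) = (if 2 \<le> N \<and> N - 1 \<in> B \<and> N - 2 \<in> B then pp B - {N - 2} else pp B)"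
  proof (cases "2 \<le> N \<and> N - 1 \<in> B \<and> N - 2 \<in> B")
    case True
    have e: "\<And>j. Suc j = N - 1 \<longleftrightarrow> j = N - 2" using True by arith
    show ?thesis using True lt by (auto simp: pp_def e)
  next
    case False
    have "pp (B - {N - 1}) = pp B"
    proof (intro equalityI subsetI)
      fix j assume "j \<in> pp (B - {N - 1})" thus "j \<in> pp B" by (auto simp: pp_def)
    next
      fix j assume j: "j \<in> pp B"
      hence jB: "j \<in> B" "Suc j \<in> B" by (auto simp: pp_def)
      have "j \<noteq> N - 1" using jB lt by fastforce
      moreover have "Suc j \<noteq> N - 1"
      proof
        assume "Suc j = N - 1"
        hence "2 \<le> N" "j = N - 2" by arith+
        thus False using False jB \<open>Suc j = N - 1\<close> by auto
      qed
      ultimately show "j \<in> pp (B - {N - 1})" using jB by (auto simp: pp_def)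
    qed
    thus ?thesis using False by (simp only: if_not_P if_False)
  qed
  moreover have "2 \<le> N \<and> N - 1 \<in> B \<and> N - 2 \<in> B \<Longrightarrow> N - 2 \<in> pp B"
  proof -
    assume a: "2 \<le> N \<and> N - 1 \<in> B \<and> N - 2 \<in> B"
    hence "Suc (N - 2) = N - 1" by arith
    thus ?thesis using a by (simp add: pp_def)
  qed
  ultimately show ?thesis using fp by simp
qed


lemma counts:
  "finite A \<Longrightarrow> \<forall>a\<in>A. a < N \<Longrightarrow>
     int (ak 1 A) = int (card A) \<and>
     2 * int (ak 2 A) = int (card A) * (int (card A) - 1) - 2 * int (card (pp A)) \<and>
     6 * int (ak 3 A) = int (card A) * (int (card A) - 1) * (int (card A) - 2)
        - 6 * (int (card A) - 2) * int (card (pp A)) + 6 * int (card (qq A))"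
proof (induction N arbitrary: A)
  case 0
  hence "A = {}" by auto
  thus ?case by (simp add: ak_def pp_def qq_def)
next
  case (Suc N)
  show ?case
  proof (cases "N \<in> A")
    case False
    have "\<forall>a\<in>A. a < N"
    proof
      fix a assume "a \<in> A" thus "a < N" using Suc.prems False less_Suc_eq by fastforce
    qed
    thus ?thesis using Suc.IH Suc.prems by blast
  next
    case True
    define B where "B = A - {N}"
    have AB: "A = insert N B" using True by (auto simp: B_def)
    have fB: "finite B" using Suc.prems by (simp add: B_def)
    have ltB: "\<forall>b\<in>B. b < N" using Suc.prems by (fastforce simp: B_def)
    define B' where "B' = B - {N - 1}"
    have fB': "finite B'" using fB by (simp add: B'_def)
    have ltB': "\<forall>b\<in>B'. b < N" using ltB by (simp add: B'_def)
    note IHB = Suc.IH[OF fB ltB]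
    note IHB' = Suc.IH[OF fB' ltB']
    have NB: "N \<notin> B" using ltB by auto
    have a1: "ak 1 A = ak 1 B + ak 0 B'" using ak_insert[OF fB ltB, of 0] by (simp add: AB B'_def)
    have a2: "ak 2 A = ak 2 B + ak 1 B'" using ak_insert[OF fB ltB, of 1] by (simp add: AB B'_def numeral_2_eq_2)
    have a3: "ak 3 A = ak 3 B + ak 2 B'" using ak_insert[OF fB ltB, of 2] by (simp add: AB B'_def numeral_3_eq_3 numeral_2_eq_2)
    have a0: "ak 0 B' = 1" using ak_0[OF fB'] .
    have cA: "card A = card B + 1" using fB NB by (simp add: AB)
    have cB': "card B' = card B - (if N - 1 \<in> B then 1 else 0)" using fB by (simp add: B'_def card_Diff_singleton_if)
    have cB1: "N - 1 \<in> B \<Longrightarrow> card B \<ge> 1" using fB by (metis One_nat_def Suc_leI card_gt_0_iff empty_iff)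
    have pA: "card (pp A) = card (pp B) + (if N - 1 \<in> B then 1 else 0)" using pp_insert[OF fB ltB] by (simp add: AB)
    have qA: "card (qq A) = card (qq B) + (if 2 \<le> N \<and> N - 1 \<in> B \<and> N - 2 \<in> B then 1 else 0)" using qq_insert[OF fB ltB] by (simp add: AB)
    have pB': "card (pp B') = card (pp B) - (if 2 \<le> N \<and> N - 1 \<in> B \<and> N - 2 \<in> B then 1 else 0)" using pp_remove[OF fB ltB] by (simp add: B'_def)
    have pB1: "2 \<le> N \<and> N - 1 \<in> B \<and> N - 2 \<in> B \<Longrightarrow> card (pp B) \<ge> 1"
    proof -
      assume a: "2 \<le> N \<and> N - 1 \<in> B \<and> N - 2 \<in> B"
      hence "Suc (N - 2) = N - 1" by arith
      hence "N - 2 \<in> pp B" using a by (simp add: pp_def)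
      moreover have "finite (pp B)" using fB by (simp add: pp_def)
      ultimately show ?thesis by (metis One_nat_def Suc_leI card_gt_0_iff empty_iff)
    qed
    have A1: "int (ak 1 A) = int (ak 1 B) + 1" using a1 a0 by simp
    have A2: "int (ak 2 A) = int (ak 2 B) + int (ak 1 B')" using a2 by simp
    have A3: "int (ak 3 A) = int (ak 3 B) + int (ak 2 B')" using a3 by simp
    have CA: "int (card A) = int (card B) + 1" using cA by simp
    obtain e1 e2 :: int where
      E: "int (card B') = int (card B) - e1" "int (card (pp A)) = int (card (pp B)) + e1"
         "int (card (qq A)) = int (card (qq B)) + e2" "int (card (pp B')) = int (card (pp B)) - e2"
      and e1: "e1 = 0 \<or> e1 = 1" and e2: "e2 = 0 \<or> (e2 = 1 \<and> e1 = 1)"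
    proof (cases "N - 1 \<in> B")
      case False
      hence nc2: "\<not> (2 \<le> N \<and> N - 1 \<in> B \<and> N - 2 \<in> B)" by auto
      show ?thesis by (rule that[of 0 0]) (use cB' pA qA pB' False nc2 in auto)
    next
      case c1: True
      show ?thesis
      proof (cases "2 \<le> N \<and> N - 1 \<in> B \<and> N - 2 \<in> B")
        case c2: True
        show ?thesis by (rule that[of 1 1]) (use cB' pA qA pB' c1 c2 cB1 pB1 in auto)
      next
        case c2: False
        show ?thesis by (rule that[of 1 0]) (use cB' pA qA pB' c1 c2 cB1 in auto)
      qed
    qed
    have I1: "int (ak 1 B) = int (card B)" "int (ak 1 B') = int (card B')" using IHB IHB' by auto
    have I2: "2 * int (ak 2 B) = int (card B) * (int (card B) - 1) - 2 * int (card (pp B))"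
      "2 * int (ak 2 B') = int (card B') * (int (card B') - 1) - 2 * int (card (pp B'))"
      using IHB IHB' by auto
    have I3: "6 * int (ak 3 B) = int (card B) * (int (card B) - 1) * (int (card B) - 2)
        - 6 * (int (card B) - 2) * int (card (pp B)) + 6 * int (card (qq B))"
      using IHB by auto
    have e1s: "e1 * e1 = e1" using e1 by auto
    have e12: "e2 * e1 = e2" using e2 by auto
    show ?thesis
    proof (intro conjI)
      show "int (ak 1 A) = int (card A)" using A1 I1 CA by simp
      show "2 * int (ak 2 A) = int (card A) * (int (card A) - 1) - 2 * int (card (pp A))"
        using A2 I1 I2(1) CA E by algebra
      show "6 * int (ak 3 A) = int (card A) * (int (card A) - 1) * (int (card A) - 2)
        - 6 * (int (card A) - 2) * int (card (pp A)) + 6 * int (card (qq A))"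
        using A3 I3 I2(2) CA E e1s e12 by algebra
    qed
  qed
qed


definition st :: "nat set \<Rightarrow> nat set" where "st A = {j\<in>A. j = 0 \<or> j - 1 \<notin> A}"
definition iso :: "nat set \<Rightarrow> nat set" where "iso A = {j\<in>st A. Suc j \<notin> A}"

lemma card_st: assumes f: "finite A" shows "card (st A) + card (pp A) = card A"
proof -
  have "A = st A \<union> Suc ` pp A"
  proof (intro equalityI subsetI)
    fix j assume j: "j \<in> A"
    show "j \<in> st A \<union> Suc ` pp A"
    proof (cases "j = 0 \<or> j - 1 \<notin> A")
      case True thus ?thesis using j by (simp add: st_def)
      next
      case False
      hence "j - 1 \<in> pp A" "j = Suc (j - 1)" using j by (auto simp: pp_def)
      thus ?thesis by blast
    qed
  qed (auto simp: st_def pp_def)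
  moreover have "st A \<inter> Suc ` pp A = {}" by (auto simp: st_def pp_def)
  moreover have "finite (st A)" "finite (pp A)" using f by (auto simp: st_def pp_def)
  ultimately have "card A = card (st A) + card (Suc ` pp A)" by (metis card_Un_disjoint finite_imageI)
  thus ?thesis by (simp add: card_image)
qed

lemma card_iso: assumes f: "finite A" shows "int (card (iso A)) = int (card A) + int (card (qq A)) - 2 * int (card (pp A))"
proof -
  have fs: "finite (st A)" "finite (pp A)" "finite (qq A)" using f by (auto simp: st_def pp_def qq_def)
  have "st A = iso A \<union> (st A \<inter> pp A)" by (auto simp: iso_def pp_def st_def)
  moreover have "iso A \<inter> (st A \<inter> pp A) = {}" by (auto simp: iso_def pp_def)
  ultimately have c1: "card (st A) = card (iso A) + card (st A \<inter> pp A)"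
    using fs by (metis card_Un_disjoint finite_Int finite_subset inf_le1 Un_upper1)
  have "pp A = (st A \<inter> pp A) \<union> Suc ` qq A"
  proof (intro equalityI subsetI)
    fix j assume j: "j \<in> pp A"
    show "j \<in> (st A \<inter> pp A) \<union> Suc ` qq A"
    proof (cases "j = 0 \<or> j - 1 \<notin> A")
      case True thus ?thesis using j by (simp add: st_def pp_def)
      next
      case False
      hence "j - 1 \<in> qq A" "j = Suc (j - 1)" using j by (auto simp: pp_def qq_def)
      thus ?thesis by blast
    qed
  qed (auto simp: st_def pp_def qq_def)
  moreover have "(st A \<inter> pp A) \<inter> Suc ` qq A = {}" by (auto simp: st_def qq_def)
  ultimately have "card (pp A) = card (st A \<inter> pp A) + card (Suc ` qq A)"
    using fs by (metis card_Un_disjoint finite_Int finite_imageI)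
  hence c2: "card (pp A) = card (st A \<inter> pp A) + card (qq A)" by (simp add: card_image)
  show ?thesis using c1 c2 card_st[OF f] by linarith
qed

lemma pp_shift: "pp ((\<lambda>i. i + 2) ` A) = (\<lambda>i. i + 2) ` pp A"
  by (auto simp: pp_def image_iff)
lemma qq_shift: "qq ((\<lambda>i. i + 2) ` A) = (\<lambda>i. i + 2) ` qq A"
  by (auto simp: qq_def image_iff)




definition SL :: "bool list \<Rightarrow> nat set" where
  "SL xs = {i. i < length xs \<and> (i = 0 \<or> xs ! (i - 1) \<noteq> xs ! i)}"

lemma runsD:
  assumes "(i, j) \<in> runs xs"
  shows "i \<le> j" "j < length xs" "\<And>k. i \<le> k \<Longrightarrow> k \<le> j \<Longrightarrow> xs ! k = xs ! i"
    "i = 0 \<or> xs ! (i - 1) \<noteq> xs ! i" "Suc j = length xs \<or> xs ! Suc j \<noteq> xs ! i"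
proof -
  have h: "i \<le> j \<and> j < length xs \<and> (\<forall>k\<in>{i..j}. xs ! k = xs ! i)
     \<and> (i = 0 \<or> xs ! (i - 1) \<noteq> xs ! i) \<and> (Suc j = length xs \<or> xs ! Suc j \<noteq> xs ! i)"
    using assms unfolding runs_def by blast
  show "i \<le> j" "j < length xs" "i = 0 \<or> xs ! (i - 1) \<noteq> xs ! i" "Suc j = length xs \<or> xs ! Suc j \<noteq> xs ! i"
    using h by blast+
  show "\<And>k. i \<le> k \<Longrightarrow> k \<le> j \<Longrightarrow> xs ! k = xs ! i" using h atLeastAtMost_iff by blast
qed


lemma runsI:
  assumes "i \<le> j" "j < length xs" "\<And>k. i \<le> k \<Longrightarrow> k \<le> j \<Longrightarrow> xs ! k = xs ! i"
    "i = 0 \<or> xs ! (i - 1) \<noteq> xs ! i" "Suc j = length xs \<or> xs ! Suc j \<noteq> xs ! i"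
  shows "(i, j) \<in> runs xs"
proof -
  have b: "\<forall>k\<in>{i..j}. xs ! k = xs ! i" proof
    fix k assume "k \<in> {i..j}" thus "xs ! k = xs ! i" by (intro assms(3)) simp_all
  qed
  show ?thesis unfolding runs_def mem_Collect_eq case_prod_conv
    using assms(1,2,4,5) b by (intro conjI) assumption+
qed

lemma runs_inj: "inj_on fst (runs xs)"
proof -
  have key: "j = j'" if r: "(i, j) \<in> runs xs" "(i, j') \<in> runs xs" and le: "j \<le> j'" for i j j'
  proof (rule ccontr)
    assume "j \<noteq> j'"
    hence lt: "j < j'" using le by simp
    have "xs ! Suc j = xs ! i" using runsD(1)[OF r(1)] lt by (intro runsD(3)[OF r(2)]) auto
    moreover have "Suc j < length xs" using lt runsD(2)[OF r(2)] by simp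
    ultimately show False using runsD(5)[OF r(1)] by simp
  qed
  show ?thesis
  proof (rule inj_onI)
    fix a b assume ab: "a \<in> runs xs" "b \<in> runs xs" "fst a = fst b"
    obtain i j i' j' where a: "a = (i, j)" and b: "b = (i', j')" by (cases a, cases b) auto
    have ii: "i' = i" using ab(3) a b by simp
    show "a = b"
    proof (cases "j \<le> j'")
      case True thus ?thesis using key[of i j j'] ab a b ii by simp
    next
      case False thus ?thesis using key[of i j' j] ab a b ii by simp
    qed
  qed
qed

lemma runs_fst: "fst ` runs xs = SL xs"
proof (intro equalityI subsetI)
  fix i assume "i \<in> fst ` runs xs"
  then obtain j where r: "(i, j) \<in> runs xs" by force
  show "i \<in> SL xs" using runsD(1,2,4)[OF r] unfolding SL_def by simp
next
  fix i assume i: "i \<in> SL xs"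
  have i1: "i < length xs" "i = 0 \<or> xs ! (i - 1) \<noteq> xs ! i" using i unfolding SL_def by simp_all
  define K where "K = {k. i \<le> k \<and> k < length xs \<and> (\<forall>l. i \<le> l \<longrightarrow> l \<le> k \<longrightarrow> xs ! l = xs ! i)}"
  have fK: "finite K" by (rule finite_subset[of _ "{..<length xs}"]) (auto simp: K_def)
  have iK: "i \<in> K" using i1 unfolding K_def by (simp add: le_antisym)
  define j where "j = Max K"
  have jK: "j \<in> K" using fK iK unfolding j_def by (intro Max_in) auto
  have jK': "i \<le> j" "j < length xs" "\<And>l. i \<le> l \<Longrightarrow> l \<le> j \<Longrightarrow> xs ! l = xs ! i"
    using jK unfolding K_def by blast+
  have jmax: "\<And>k. k \<in> K \<Longrightarrow> k \<le> j" using fK by (simp add: j_def)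
  have endc: "Suc j = length xs \<or> xs ! Suc j \<noteq> xs ! i"
  proof (rule ccontr)
    assume a: "\<not> (Suc j = length xs \<or> xs ! Suc j \<noteq> xs ! i)"
    have "Suc j \<in> K"
      unfolding K_def
    proof (intro CollectI conjI allI impI)
      show "i \<le> Suc j" using jK'(1) by simp
      show "Suc j < length xs" using jK'(2) a by simp
      fix l assume "i \<le> l" "l \<le> Suc j"
      show "xs ! l = xs ! i"
      proof (cases "l = Suc j")
        case True thus ?thesis using a by simp
      next
        case False thus ?thesis using \<open>i \<le> l\<close> \<open>l \<le> Suc j\<close> by (intro jK'(3)) simp_all
      qed
    qed
    thus False using jmax by fastforce
  qed
  have "(i, j) \<in> runs xs" using jK'(1,2) endc i1(2) by (intro runsI jK'(3)) simp_all
  thus "i \<in> fst ` runs xs" by force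
qed

lemma card_runs: "card (runs xs) = card (SL xs)"
  using runs_inj runs_fst by (metis card_image)

lemma deriv_len: "length (deriv_seq x) = length x - 1"
  by (simp add: deriv_seq_def)

lemma deriv_nth: "i < length x - 1 \<Longrightarrow> deriv_seq x ! i = (x ! i \<noteq> x ! Suc i)"
  by (simp add: deriv_seq_def nth_tl)



lemma choose2_int: "2 * int (w choose 2) = int w * (int w - 1)"
proof (induction w)
  case 0 thus ?case by simp
next
  case (Suc w)
  have "Suc w choose 2 = (w choose 1) + (w choose 2)" using binomial_Suc_Suc[of w 1] by (simp add: numeral_2_eq_2)
  thus ?case using Suc.IH by (simp add: algebra_simps)
qed

lemma choose3_int: "6 * int (w choose 3) = int w * (int w - 1) * (int w - 2)"
proof (induction w)
  case 0 thus ?case by simp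
next
  case (Suc w)
  have "Suc w choose 3 = (w choose 2) + (w choose 3)" using binomial_Suc_Suc[of w 2] by (simp add: numeral_3_eq_3 numeral_2_eq_2)
  hence "6 * int (Suc w choose 3) = 3 * (2 * int (w choose 2)) + 6 * int (w choose 3)" by simp
  also have "\<dots> = 3 * (int w * (int w - 1)) + int w * (int w - 1) * (int w - 2)" using Suc.IH choose2_int by simp
  finally show ?case by (simp add: algebra_simps)
qed

definition A0 :: "bool list \<Rightarrow> nat set" where
  "A0 x = {i. i < length (deriv_seq x) \<and> deriv_seq x ! i}"
definition DD :: "bool list \<Rightarrow> nat set" where
  "DD x = (\<lambda>i. i + 2) ` A0 x"

lemma finite_A0: "finite (A0 x)" by (simp add: A0_def)
lemma finite_DD: "finite (DD x)" by (simp add: DD_def finite_A0)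

lemma DD_mem: "j \<in> DD x \<longleftrightarrow> 2 \<le> j \<and> j \<le> length x \<and> x ! (j - 2) \<noteq> x ! (j - 1)"
proof
  assume "j \<in> DD x"
  then obtain i where i: "j = i + 2" "i < length x - 1" "deriv_seq x ! i" by (auto simp: DD_def A0_def deriv_len)
  thus "2 \<le> j \<and> j \<le> length x \<and> x ! (j - 2) \<noteq> x ! (j - 1)" using deriv_nth[OF i(2)] by auto
next
  assume j: "2 \<le> j \<and> j \<le> length x \<and> x ! (j - 2) \<noteq> x ! (j - 1)"
  define i where "i = j - 2"
  have i: "j = i + 2" "i < length x - 1" using j by (auto simp: i_def)
  have "Suc i = j - 1" using j unfolding i_def by arith
  hence "deriv_seq x ! i" using deriv_nth[OF i(2)] j by (simp add: i_def)
  thus "j \<in> DD x" using i by (auto simp: DD_def A0_def deriv_len)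
qed

lemma length_phi: "length (phi E x) = length x" by (simp add: phi_def del: upt_Suc)

lemma nth_phi: "i < length x \<Longrightarrow> phi E x ! i = (if Suc i \<in> E then x ! (i - 1) else x ! i)"
  by (simp add: phi_def del: upt_Suc)

lemma Phi_eq: "Phi t x = (\<lambda>E. phi E x) ` {E. E \<subseteq> DD x \<and> nc E \<and> card E \<le> t}"
proof (intro equalityI subsetI)
  fix y assume "y \<in> Phi t x"
  then obtain E where E: "grain_pattern (length x) E" "card E \<le> t" and y: "y = phi E x"
    by (auto simp: Phi_def)
  have E1: "E \<subseteq> {2..length x}" "\<forall>j\<in>E. Suc j \<notin> E" using E(1) by (auto simp: grain_pattern_def)
  define E' where "E' = E \<inter> DD x"
  have "phi E x = phi E' x"
  proof (rule nth_equalityI)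
    show "length (phi E x) = length (phi E' x)" by (simp add: length_phi)
    fix i assume "i < length (phi E x)"
    hence i: "i < length x" by (simp add: length_phi)
    show "phi E x ! i = phi E' x ! i"
    proof (cases "Suc i \<in> E \<and> Suc i \<notin> DD x")
      case True
      hence "2 \<le> Suc i" "Suc i \<le> length x" using E1(1) by auto
      hence "x ! (Suc i - 2) = x ! (Suc i - 1)" using True DD_mem[of "Suc i" x] by blast
      hence "x ! (i - 1) = x ! i" by simp
      thus ?thesis using True i by (simp add: nth_phi E'_def)
    next
      case False
      thus ?thesis using i by (auto simp: nth_phi E'_def)
    qed
  qed
  moreover have "E' \<subseteq> DD x" "nc E'" using E1 by (auto simp: E'_def nc_def)
  moreover have "card E' \<le> t"
  proof -
    have "finite E" using E1(1) finite_subset by blast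
    hence "card E' \<le> card E" by (simp add: E'_def card_mono)
    thus ?thesis using E(2) by simp
  qed
  ultimately show "y \<in> (\<lambda>E. phi E x) ` {E. E \<subseteq> DD x \<and> nc E \<and> card E \<le> t}" using y by blast
next
  fix y assume "y \<in> (\<lambda>E. phi E x) ` {E. E \<subseteq> DD x \<and> nc E \<and> card E \<le> t}"
  then obtain E where E: "E \<subseteq> DD x" "nc E" "card E \<le> t" and y: "y = phi E x" by blast
  have "E \<subseteq> {2..length x}" using E(1) DD_mem by fastforce
  hence "grain_pattern (length x) E" using E(2) by (simp add: grain_pattern_def nc_def)
  thus "y \<in> Phi t x" using E(3) y by (auto simp: Phi_def)
qed

lemma phi_inj: "inj_on (\<lambda>E. phi E x) {E. E \<subseteq> DD x \<and> nc E \<and> card E \<le> t}"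
proof -
  have key: "phi E1 x \<noteq> phi E2 x" if "E1 \<subseteq> DD x" "j \<in> E1" "j \<notin> E2" for E1 E2 j
  proof
    assume eq: "phi E1 x = phi E2 x"
    have j: "2 \<le> j" "j \<le> length x" "x ! (j - 2) \<noteq> x ! (j - 1)" using that DD_mem by blast+
    have i: "j - 1 < length x" using j by simp
    have sj: "Suc (j - 1) = j" using j by simp
    have "phi E1 x ! (j - 1) = x ! (j - 2)" using nth_phi[OF i, of E1] that(2) sj by (simp add: numeral_2_eq_2)
    moreover have "phi E2 x ! (j - 1) = x ! (j - 1)" using nth_phi[OF i, of E2] that(3) sj by simp
    ultimately show False using eq j(3) by simp
  qed
  show ?thesis
  proof (rule inj_onI)
    fix E1 E2 assume a: "E1 \<in> {E. E \<subseteq> DD x \<and> nc E \<and> card E \<le> t}" "E2 \<in> {E. E \<subseteq> DD x \<and> nc E \<and> card E \<le> t}"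
      and eq: "phi E1 x = phi E2 x"
    show "E1 = E2"
    proof (rule ccontr)
      assume "E1 \<noteq> E2"
      then obtain j where "(j \<in> E1 \<and> j \<notin> E2) \<or> (j \<in> E2 \<and> j \<notin> E1)" by blast
      thus False using key[of E1 j E2] key[of E2 j E1] a eq by auto
    qed
  qed
qed

lemma card_Phi: "card (Phi t x) = card {E. E \<subseteq> DD x \<and> nc E \<and> card E \<le> t}"
  unfolding Phi_eq using phi_inj by (rule card_image)

lemma cc_Suc: assumes f: "finite A"
  shows "card {E. E \<subseteq> A \<and> nc E \<and> card E \<le> Suc t} = card {E. E \<subseteq> A \<and> nc E \<and> card E \<le> t} + ak (Suc t) A"
proof -
  have "{E. E \<subseteq> A \<and> nc E \<and> card E \<le> Suc t} = {E. E \<subseteq> A \<and> nc E \<and> card E \<le> t} \<union> {E. E \<subseteq> A \<and> nc E \<and> card E = Suc t}"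
    by auto
  moreover have "finite {E. E \<subseteq> A \<and> nc E \<and> card E \<le> t}" "finite {E. E \<subseteq> A \<and> nc E \<and> card E = Suc t}"
    using f by (auto intro: finite_subset[of _ "Pow A"])
  ultimately show ?thesis unfolding ak_def by (subst card_Un_disjoint[symmetric]) auto
qed

lemma cc_0: assumes f: "finite A" shows "card {E. E \<subseteq> A \<and> nc E \<and> card E \<le> 0} = 1"
  using ak_0[OF f] by (simp add: ak_def)


lemma omega_eq: "hamming_weight (deriv_seq x) = card (A0 x)"
  by (simp add: hamming_weight_def length_filter_conv_card A0_def)

lemma card_DD: "card (DD x) = card (A0 x)"
  unfolding DD_def by (rule card_image) (simp add: inj_on_def)

lemma pp_DD: "card (pp (DD x)) = card (pp (A0 x))"
  unfolding DD_def pp_shift by (rule card_image) (simp add: inj_on_def)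

lemma qq_DD: "card (qq (DD x)) = card (qq (A0 x))"
  unfolding DD_def qq_shift by (rule card_image) (simp add: inj_on_def)

lemma m_eq: "card (one_runs (deriv_seq x)) = card (st (A0 x))"
proof -
  let ?d = "deriv_seq x"
  have inj: "inj_on fst (one_runs ?d)" using runs_inj by (rule inj_on_subset) (auto simp: one_runs_def)
  have "fst ` one_runs ?d = {i \<in> fst ` runs ?d. ?d ! i}" by (force simp: one_runs_def)
  also have "\<dots> = {i \<in> SL ?d. ?d ! i}" by (simp add: runs_fst)
  also have "\<dots> = st (A0 x)"
  proof (intro equalityI subsetI)
    fix i assume "i \<in> {i \<in> SL ?d. ?d ! i}"
    thus "i \<in> st (A0 x)" by (auto simp: SL_def st_def A0_def)
  next
    fix i assume i: "i \<in> st (A0 x)"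
    hence "i < length ?d" "?d ! i" "i = 0 \<or> i - 1 \<notin> A0 x" by (auto simp: st_def A0_def)
    moreover have "i \<noteq> 0 \<Longrightarrow> i - 1 < length ?d" using \<open>i < length ?d\<close> by simp
    ultimately show "i \<in> {i \<in> SL ?d. ?d ! i}" by (auto simp: SL_def A0_def)
  qed
  finally show ?thesis using inj by (metis card_image)
qed

lemma m1_eq: "card {(i, j) \<in> one_runs (deriv_seq x). j = i} = card (iso (A0 x))"
proof -
  let ?d = "deriv_seq x"
  have "{(i, j) \<in> one_runs ?d. j = i} = (\<lambda>i. (i, i)) ` iso (A0 x)"
  proof (intro equalityI subsetI)
    fix p assume "p \<in> {(i, j) \<in> one_runs ?d. j = i}"
    then obtain i where p: "p = (i, i)" and r: "(i, i) \<in> runs ?d" and di: "?d ! i"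
      by (auto simp: one_runs_def)
    note R = runsD(1,2,4,5)[OF r]
    have "i \<in> A0 x" using R di by (simp add: A0_def)
    moreover have "i = 0 \<or> i - 1 \<notin> A0 x" using R(3) di by (auto simp: A0_def)
    moreover have "Suc i \<notin> A0 x" using R(4) di by (auto simp: A0_def)
    ultimately show "p \<in> (\<lambda>i. (i, i)) ` iso (A0 x)" using p by (auto simp: iso_def st_def)
  next
    fix p assume "p \<in> (\<lambda>i. (i, i)) ` iso (A0 x)"
    then obtain i where p: "p = (i, i)" and i: "i \<in> iso (A0 x)" by blast
    have i1: "i < length ?d" "?d ! i" "i = 0 \<or> i - 1 \<notin> A0 x" "Suc i \<notin> A0 x"
      using i by (auto simp: iso_def st_def A0_def)
    have "(i, i) \<in> runs ?d"
    proof (rule runsI)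
      show "i \<le> i" "i < length ?d" using i1 by simp_all
      show "\<And>k. i \<le> k \<Longrightarrow> k \<le> i \<Longrightarrow> ?d ! k = ?d ! i" by (simp add: le_antisym)
      show "i = 0 \<or> ?d ! (i - 1) \<noteq> ?d ! i" using i1 by (cases "i = 0") (auto simp: A0_def)
      show "Suc i = length ?d \<or> ?d ! Suc i \<noteq> ?d ! i" using i1 by (cases "Suc i < length ?d") (auto simp: A0_def)
    qed
    thus "p \<in> {(i, j) \<in> one_runs ?d. j = i}" using p i1 by (simp add: one_runs_def)
  qed
  moreover have "inj_on (\<lambda>i. (i, i)) (iso (A0 x))" by (simp add: inj_on_def)
  ultimately show ?thesis by (simp add: card_image)
qed

lemma runs_x: assumes "length x \<ge> 1" shows "num_runs x = 1 + card (A0 x)"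
proof -
  have "SL x = insert 0 (Suc ` A0 x)"
  proof (intro equalityI subsetI)
    fix i assume i: "i \<in> SL x"
    show "i \<in> insert 0 (Suc ` A0 x)"
    proof (cases i)
      case 0 thus ?thesis by simp
    next
      case (Suc k)
      hence "k < length x - 1" "x ! k \<noteq> x ! Suc k" using i by (auto simp: SL_def)
      hence "k \<in> A0 x" using deriv_nth[of k x] by (simp add: A0_def deriv_len)
      thus ?thesis using Suc by simp
    qed
  next
    fix i assume i: "i \<in> insert 0 (Suc ` A0 x)"
    show "i \<in> SL x"
    proof (cases "i = 0")
      case True
      have "x \<noteq> []" using assms by auto
      thus ?thesis using True by (simp add: SL_def)
    next
      case False
      then obtain k where k: "i = Suc k" "k \<in> A0 x" using i by blast
      hence "k < length x - 1" "deriv_seq x ! k" by (auto simp: A0_def deriv_len)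
      hence "x ! k \<noteq> x ! Suc k" using deriv_nth[of k x] by simp
      thus ?thesis using k \<open>k < length x - 1\<close> by (auto simp: SL_def)
    qed
  qed
  moreover have "0 \<notin> Suc ` A0 x" by auto
  ultimately have "card (SL x) = 1 + card (A0 x)" using finite_A0 by (simp add: card_image)
  thus ?thesis by (simp add: num_runs_def card_runs)
qed


theorem proposition2p1:
  fixes n :: nat and x :: "bool list"
  assumes "n \<ge> 1" and "length x = n"
  defines "\<omega> \<equiv> hamming_weight (deriv_seq x)"
      and "m \<equiv> card (one_runs (deriv_seq x))"
      and "m1 \<equiv> card {(i, j) \<in> one_runs (deriv_seq x). j = i}"
  shows "(card (Phi 1 x) = 1 + \<omega> \<and> 1 + \<omega> = num_runs x)
       \<and> card (Phi 2 x) = 1 + m + (\<omega> choose 2)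
       \<and> int (card (Phi 3 x)) = 1 + int m1 + int m * (int \<omega> - 3) + int (\<omega> choose 3)
           - int (\<omega> choose 2) + 2 * int \<omega>"
proof -
  define D where "D = DD x"
  define w where "w = card (A0 x)"
  define p where "p = card (pp (A0 x))"
  define q where "q = card (qq (A0 x))"
  have fD: "finite D" by (simp add: D_def finite_DD)
  have ltD: "\<forall>a\<in>D. a < Suc (length x)" using DD_mem by (auto simp: D_def)
  note C = counts[OF fD ltD]
  have cD: "card D = w" "card (pp D) = p" "card (qq D) = q"
    by (simp_all add: D_def w_def p_def q_def card_DD pp_DD qq_DD)
  have om: "\<omega> = w" by (simp add: \<omega>_def omega_eq w_def)
  have mm: "int m = int w - int p" using card_st[OF finite_A0, of x] by (simp add: m_def m_eq w_def p_def)
  have mm1: "int m1 = int w + int q - 2 * int p" using card_iso[OF finite_A0, of x] by (simp add: m1_def m1_eq w_def p_def q_def)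
  have P1: "card (Phi 1 x) = 1 + ak 1 D"
    using cc_Suc[OF fD, of 0] cc_0[OF fD] by (simp add: card_Phi D_def)
  have P2: "card (Phi 2 x) = card (Phi 1 x) + ak 2 D"
    using cc_Suc[OF fD, of 1] by (simp add: card_Phi D_def numeral_2_eq_2)
  have P3: "card (Phi 3 x) = card (Phi 2 x) + ak 3 D"
    using cc_Suc[OF fD, of 2] by (simp add: card_Phi D_def numeral_2_eq_2 numeral_3_eq_3)
  have a1: "int (ak 1 D) = int w" using C cD by simp
  have a2: "2 * int (ak 2 D) = int w * (int w - 1) - 2 * int p" using C cD by simp
  have a3: "6 * int (ak 3 D) = int w * (int w - 1) * (int w - 2) - 6 * (int w - 2) * int p + 6 * int q"
    using C cD by simp
  have c2: "2 * int (w choose 2) = int w * (int w - 1)" by (rule choose2_int)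
  have c3: "6 * int (w choose 3) = int w * (int w - 1) * (int w - 2)" by (rule choose3_int)
  have r1: "card (Phi 1 x) = 1 + \<omega>" using P1 a1 om by simp
  have r0: "1 + \<omega> = num_runs x" using runs_x[of x] assms(1,2) om w_def by simp
  have "int (card (Phi 2 x)) = 1 + int m + int (\<omega> choose 2)"
    using P2 r1 a2 c2 mm om by simp
  hence r2: "card (Phi 2 x) = 1 + m + (\<omega> choose 2)" by linarith
  have "6 * int (card (Phi 3 x)) = 6 * (1 + int m1 + int m * (int \<omega> - 3) + int (\<omega> choose 3)
           - int (\<omega> choose 2) + 2 * int \<omega>)"
  proof -
    have e3: "int (card (Phi 3 x)) = int (card (Phi 2 x)) + int (ak 3 D)" using P3 by simp
    have e2: "int (card (Phi 2 x)) = 1 + int w + int (ak 2 D)" using P2 r1 om by simp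
    show ?thesis unfolding om mm mm1 using e3 e2 a2 a3 c2 c3 by algebra
  qed
  hence r3: "int (card (Phi 3 x)) = 1 + int m1 + int m * (int \<omega> - 3) + int (\<omega> choose 3)
           - int (\<omega> choose 2) + 2 * int \<omega>" by simp
  show ?thesis using r0 r1 r2 r3 by simp
qed


end
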